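(* Let $n$ be a positive integer. Then: (1) For any symmetric bilinear form $S\in \mathcal{S}_n(k)$ there exist units $u_1, \dots, u_n \in k^\times$ such that $S$ is naively homotopic to the diagonal form $\langle u_1,\dots,u_n \rangle$. (2) For any pointed rational function $f\in \mathcal{F}_n(k)$ there exist units $u_1, \dots, u_n \in k^\times$ such that $f$ and $[u_1,\dots,u_n]$ are in the same pointed naive homotopy class.
   Context: Let $k$ be a field. $\mathcal{S}_n$ is the scheme of non-degenerate $n\times n$ symmetric matrices; two elements of $\mathcal{S}_n(k)$ are naively homotopic if they are linked by a finite chain of elements of $\mathcal{S}_n(k[T])$ evaluated at $T=0$ and $T=1$. $\mathcal{F}_n(k)$ is the set of pointed degree $n$ rational functions $\frac AB$ ($A\in k[X]$ monic of degree $n$, $\deg B<n$, $\mathrm{res}_{n,n}(A,B)\neq0$); pointed naive homotopy is the equivalence relation generated by elements of $\mathcal{F}_n(k[T])$ evaluated at $T=0,1$. $\langle u_1,\dots,u_n\rangle$ denotes the diagonal form $\langle u_1\rangle\oplus\dots\oplus\langle u_n\rangle\in\mathcal{S}_n(k)$, and $[u_1,\dots,u_n]$ denotes the rational function $\frac{X}{u_1}\oplus^{\mathrm{N}}\dots\oplus^{\mathrm{N}}\frac{X}{u_n}\in\mathcal{F}_n(k)$, where $\oplus^{\mathrm{N}}$ is defined by: if $A_iU_i+B_iV_i=1$ are Bézout relations ($\deg U_i\leq n_i-2$, $\deg V_i\leq n_i-1$), then $\frac{A_1}{B_1}\oplus^{\mathrm{N}}\frac{A_2}{B_2}=\frac{A_3}{B_3}$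 with $\begin{bmatrix}A_3 & -V_3\\ B_3 & U_3\end{bmatrix} = \begin{bmatrix}A_1 & -V_1\\ B_1 & U_1\end{bmatrix}\begin{bmatrix}A_2 & -V_2\\ B_2 & U_2\end{bmatrix}$. *)

theory Defs
  imports "Jordan_Normal_Form.Determinant" "Subresultants.Resultant_Prelim"
begin

definition sym_nondeg :: "nat \<Rightarrow> 'r::comm_ring_1 mat set" where
  "sym_nondeg n = {M. M \<in> carrier_mat n n \<and> transpose_mat M = M \<and> det M dvd 1}"

definition eval_mat :: "'a::comm_ring_1 poly mat \<Rightarrow> 'a \<Rightarrow> 'a mat" where
  "eval_mat M t = map_mat (\<lambda>p. poly p t) M"

definition sym_elem_htpy :: "nat \<Rightarrow> 'a::field mat \<Rightarrow> 'a mat \<Rightarrow> bool" where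
  "sym_elem_htpy n S1 S2 \<longleftrightarrow> (\<exists>H \<in> sym_nondeg n. eval_mat H 0 = S1 \<and> eval_mat H 1 = S2)"

definition sym_naive_htpc :: "nat \<Rightarrow> 'a::field mat \<Rightarrow> 'a mat \<Rightarrow> bool" where
  "sym_naive_htpc n = (\<lambda>x y. sym_elem_htpy n x y \<or> sym_elem_htpy n y x)\<^sup>*\<^sup>*"

definition diag_form :: "'a::field list \<Rightarrow> 'a mat" where
  "diag_form us = mat (length us) (length us) (\<lambda>(i,j). if i = j then us ! i else 0)"

text \<open>F_n(R): pointed degree n rational functions A/B, represented as pairs (A,B),
  A monic of degree n, deg B < n, res_{n,n}(A,B) a unit of R.\<close>
definition ratfun :: "nat \<Rightarrow> ('r::comm_ring_1 poly \<times> 'r poly) set" where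
  "ratfun n = {(A,B). lead_coeff A = 1 \<and> degree A = n \<and> degree B < n
                      \<and> resultant_sub n n A B dvd 1}"

text \<open>Evaluation of an element over k[T] (polynomials in X with coefficients in k[T]) at T = t.\<close>
definition eval_ratfun :: "'a::comm_ring_1 poly poly \<times> 'a poly poly \<Rightarrow> 'a \<Rightarrow> 'a poly \<times> 'a poly" where
  "eval_ratfun f t = (map_poly (\<lambda>c. poly c t) (fst f), map_poly (\<lambda>c. poly c t) (snd f))"

definition ratfun_elem_htpy :: "nat \<Rightarrow> 'a::field poly \<times> 'a poly \<Rightarrow> 'a poly \<times> 'a poly \<Rightarrow> bool" where
  "ratfun_elem_htpy n f g \<longleftrightarrow> (\<exists>H \<in> ratfun n. eval_ratfun H 0 = f \<and> eval_ratfun H 1 = g)"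

definition ratfun_naive_htpc :: "nat \<Rightarrow> 'a::field poly \<times> 'a poly \<Rightarrow> 'a poly \<times> 'a poly \<Rightarrow> bool" where
  "ratfun_naive_htpc n = (\<lambda>x y. ratfun_elem_htpy n x y \<or> ratfun_elem_htpy n y x)\<^sup>*\<^sup>*"

text \<open>Bezout coefficients (U,V) with A U + B V = 1, deg U \<le> deg A - 2, deg V \<le> deg A - 1
  (the zero polynomial has degree -\<infinity>).\<close>
definition bezout_UV :: "'a::field poly \<Rightarrow> 'a poly \<Rightarrow> 'a poly \<times> 'a poly" where
  "bezout_UV A B = (THE (U,V). A * U + B * V = 1
       \<and> (U = 0 \<or> degree U + 2 \<le> degree A) \<and> (V = 0 \<or> degree V + 1 \<le> degree A))"

text \<open>The naive sum: first column of the product of the 2x2 matrices [[A,-V],[B,U]].\<close>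
definition oplusN :: "'a::field poly \<times> 'a poly \<Rightarrow> 'a poly \<times> 'a poly \<Rightarrow> 'a poly \<times> 'a poly" where
  "oplusN f g = (let (A1,B1) = f; (A2,B2) = g; (U1,V1) = bezout_UV A1 B1
                 in (A1 * A2 - V1 * B2, B1 * A2 + U1 * B2))"

text \<open>[u_1,...,u_n] = X/u_1 \<oplus>N ... \<oplus>N X/u_n (X/u is the pair (X, u)).\<close>
fun diag_ratfun :: "'a::field list \<Rightarrow> 'a poly \<times> 'a poly" where
  "diag_ratfun [] = (1, 0)"
| "diag_ratfun [u] = ([:0,1:], [:u:])"
| "diag_ratfun (u # us) = oplusN ([:0,1:], [:u:]) (diag_ratfun us)"

end

theory Submission
  imports Defs
begin


definition rowmat :: "nat \<Rightarrow> nat \<Rightarrow> (nat \<Rightarrow> 'r::comm_ring_1) \<Rightarrow> 'r mat" where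
 "rowmat N p w = mat N N (\<lambda>(i,j). (if i = j then 1 else 0) + (if i = p then w j else 0))"

definition congf :: "nat \<Rightarrow> 'r::comm_ring_1 mat \<Rightarrow> nat \<Rightarrow> (nat \<Rightarrow> 'r) \<Rightarrow> 'r mat" where
 "congf N S p w = mat N N (\<lambda>(i,j). S$$(i,j) + w j * S$$(i,p) + w i * S$$(p,j) + w i * w j * S$$(p,p))"

lemma rowmat_carrier[simp]: "rowmat N p w \<in> carrier_mat N N"
  by (simp add: rowmat_def)

lemma mult_rowmat: assumes S: "S \<in> carrier_mat N N" and p: "p < N" and i: "i < N" and j: "j < N"
  shows "(S * rowmat N p w) $$ (i,j) = S$$(i,j) + w j * S$$(i,p)"
proof -
  have "(S * rowmat N p w) $$ (i,j) = (\<Sum>k\<in>{0..<N}. S$$(i,k) * ((if k = j then 1 else 0) + (if k = p then w j else 0)))"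
    using S i j by (simp add: rowmat_def scalar_prod_def)
  also have "\<dots> = (\<Sum>k\<in>{0..<N}. (if k = j then S$$(i,k) else 0)) + (\<Sum>k\<in>{0..<N}. (if k = p then S$$(i,k) * w j else 0))"
    by (subst sum.distrib[symmetric], rule sum.cong, auto simp: distrib_left)
  also have "\<dots> = S$$(i,j) + w j * S$$(i,p)" using j p by (simp add: mult.commute)
  finally show ?thesis .
qed

lemma tmult_rowmat: assumes S: "S \<in> carrier_mat N N" and p: "p < N" and i: "i < N" and j: "j < N"
  shows "(transpose_mat (rowmat N p w) * S) $$ (i,j) = S$$(i,j) + w i * S$$(p,j)"
proof -
  have "(transpose_mat (rowmat N p w) * S) $$ (i,j) = (\<Sum>k\<in>{0..<N}. ((if k = i then 1 else 0) + (if k = p then w i else 0)) * S$$(k,j))"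
    using S i j by (simp add: rowmat_def scalar_prod_def)
  also have "\<dots> = (\<Sum>k\<in>{0..<N}. (if k = i then S$$(k,j) else 0)) + (\<Sum>k\<in>{0..<N}. (if k = p then w i * S$$(k,j) else 0))"
    by (subst sum.distrib[symmetric], rule sum.cong, auto simp: distrib_right)
  also have "\<dots> = S$$(i,j) + w i * S$$(p,j)" using i p by simp
  finally show ?thesis .
qed

lemma cong_formula: assumes S: "S \<in> carrier_mat N N" and p: "p < N"
  shows "transpose_mat (rowmat N p w) * S * rowmat N p w = congf N S p w"
proof (rule eq_matI)
  fix i j assume i: "i < dim_row (congf N S p w)" and j: "j < dim_col (congf N S p w)"
  hence i: "i < N" and j: "j < N" by (auto simp: congf_def)
  have X: "transpose_mat (rowmat N p w) * S \<in> carrier_mat N N" using S by (auto simp: rowmat_def)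
  show "(transpose_mat (rowmat N p w) * S * rowmat N p w) $$ (i, j) = congf N S p w $$ (i, j)"
    using mult_rowmat[OF X p i j] tmult_rowmat[OF S p i j] tmult_rowmat[OF S p p j] tmult_rowmat[OF S p i p] tmult_rowmat[OF S p p p] i j
    by (simp add: congf_def algebra_simps)
qed (insert S, auto simp: congf_def rowmat_def)

lemma det_rowmat: assumes p: "p < N" and wp: "w p = 0"
  and side: "(\<forall>j. w j \<noteq> 0 \<longrightarrow> j < p) \<or> (\<forall>j. w j \<noteq> 0 \<longrightarrow> p < j)"
  shows "det (rowmat N p w) = 1"
proof -
  have diag: "prod_list (diag_mat (rowmat N p w)) = 1"
    unfolding prod_list_diag_prod by (rule prod.neutral, auto simp: rowmat_def wp)
  from side show ?thesis
  proof
    assume s: "\<forall>j. w j \<noteq> 0 \<longrightarrow> j < p"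
    have "det (rowmat N p w) = prod_list (diag_mat (rowmat N p w))"
      by (rule det_lower_triangular[of N], insert s, auto simp: rowmat_def)
    with diag show ?thesis by simp
  next
    assume s: "\<forall>j. w j \<noteq> 0 \<longrightarrow> p < j"
    have "det (rowmat N p w) = prod_list (diag_mat (rowmat N p w))"
      by (rule det_upper_triangular[of _ N], insert s, auto simp: rowmat_def upper_triangular_def)
    with diag show ?thesis by simp
  qed
qed

lemma det_lift: "det (map_mat (\<lambda>x. [:x:]) (S :: 'a :: comm_ring_1 mat)) = [:det S:]"
proof -
  interpret c: comm_ring_hom "\<lambda>x::'a. [:x:]"
    by (unfold_locales) (auto simp: one_pCons)
  show ?thesis by (rule c.hom_det)
qed

lemma sym_entry: assumes "transpose_mat S = S" "S \<in> carrier_mat N N" "i < N" "j < N"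
  shows "S$$(j,i) = S$$(i,j)"
proof -
  have "(transpose_mat S)$$(i,j) = S$$(j,i)" using assms(2-4) by auto
  thus ?thesis using assms(1) by metis
qed

lemma sym_nondegI: assumes "S \<in> carrier_mat N N" "\<And>i j. i < N \<Longrightarrow> j < N \<Longrightarrow> S$$(j,i) = S$$(i,j)"
  "det S dvd 1" shows "S \<in> sym_nondeg N"
proof -
  have "transpose_mat S = S" by (rule eq_matI, insert assms(1,2), auto)
  thus ?thesis unfolding sym_nondeg_def using assms by auto
qed

lemma elem_htpc: "sym_elem_htpy N S T \<Longrightarrow> sym_naive_htpc N S T"
  unfolding sym_naive_htpc_def by (rule r_into_rtranclp) simp

lemma htpc_trans: "sym_naive_htpc N S T \<Longrightarrow> sym_naive_htpc N T R \<Longrightarrow> sym_naive_htpc N S R"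
  unfolding sym_naive_htpc_def by (rule rtranclp_trans)

lemma htpy_congf: fixes S :: "'a::field mat"
  assumes S: "S \<in> sym_nondeg N" and p: "p < N" and wp: "w p = 0"
  and side: "(\<forall>j. w j \<noteq> 0 \<longrightarrow> j < p) \<or> (\<forall>j. w j \<noteq> 0 \<longrightarrow> p < j)"
  shows "sym_naive_htpc N S (congf N S p w)" "congf N S p w \<in> sym_nondeg N"
proof -
  have Sc: "S \<in> carrier_mat N N" and St: "transpose_mat S = S" and Sd: "det S dvd 1"
    using S by (auto simp: sym_nondeg_def)
  note se = sym_entry[OF St Sc]
  define L where "L = map_mat (\<lambda>x. [:x:]) S"
  define W where "W = (\<lambda>j. [:0, w j:])"
  define H where "H = congf N L p W"
  have Lc: "L \<in> carrier_mat N N" using Sc by (simp add: L_def)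
  have Wp: "W p = 0" using wp by (simp add: W_def)
  have Wside: "(\<forall>j. W j \<noteq> 0 \<longrightarrow> j < p) \<or> (\<forall>j. W j \<noteq> 0 \<longrightarrow> p < j)"
    using side by (auto simp: W_def)
  have Hc: "H \<in> carrier_mat N N" by (simp add: H_def congf_def)
  have "det H = det (transpose_mat (rowmat N p W)) * det L * det (rowmat N p W)"
    unfolding H_def cong_formula[OF Lc p, symmetric]
    by (subst det_mult[of _ N], insert Lc, auto simp: rowmat_def det_mult[of _ N])
  also have "\<dots> = [:det S:]"
    using det_rowmat[OF p Wp Wside] det_transpose[OF rowmat_carrier[of N p W]]
    by (simp add: L_def det_lift)
  finally have dH: "det H = [:det S:]" .
  have "det H dvd 1" unfolding dH using Sd by (auto intro!: is_unit_triv)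
  moreover have "\<And>i j. i<N \<Longrightarrow> j<N \<Longrightarrow> H$$(j,i) = H$$(i,j)"
    using Sc p by (simp add: H_def congf_def L_def se algebra_simps)
  ultimately have Hs: "H \<in> sym_nondeg N"
    by (intro sym_nondegI[OF Hc])
  have Sc2: "congf N S p w \<in> carrier_mat N N" by (simp add: congf_def)
  have "det (congf N S p w) = det S"
    unfolding cong_formula[OF Sc p, symmetric] using det_rowmat[OF p wp side] det_transpose[OF rowmat_carrier[of N p w]] Sc
    by (subst det_mult[of _ N], auto simp: rowmat_def det_mult[of _ N])
  thus "congf N S p w \<in> sym_nondeg N"
    by (intro sym_nondegI[OF Sc2]) (auto simp: congf_def se p Sd algebra_simps)
  have e0: "eval_mat H 0 = S"
    by (rule eq_matI, insert Sc, auto simp: eval_mat_def H_def congf_def L_def W_def p)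
  have e1: "eval_mat H 1 = congf N S p w"
    by (rule eq_matI, insert Sc, auto simp: eval_mat_def H_def congf_def L_def W_def p)
  show "sym_naive_htpc N S (congf N S p w)"
    by (rule elem_htpc, unfold sym_elem_htpy_def, rule bexI[OF _ Hs], simp add: e0 e1)
qed

lemma det_eq_rowcol: fixes A B :: "'a::comm_ring_1 mat"
  assumes A: "A \<in> carrier_mat N N" and B: "B \<in> carrier_mat N N" and k: "k<N" and l: "l<N"
  and row: "\<And>j. j<N \<Longrightarrow> A$$(k,j) = B$$(k,j)" and rz: "\<And>j. j<N \<Longrightarrow> j\<noteq>l \<Longrightarrow> A$$(k,j) = 0"
  and out: "\<And>i j. i<N \<Longrightarrow> j<N \<Longrightarrow> j\<noteq>l \<Longrightarrow> A$$(i,j) = B$$(i,j)"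
  shows "det A = det B"
proof -
  have md: "mat_delete A k l = mat_delete B k l"
    by (rule eq_matI, insert A B k l, auto simp: mat_delete_def intro!: out)
  have "det A = (\<Sum>j<N. A $$ (k,j) * cofactor A k j)" by (rule laplace_expansion_row[OF A k])
  also have "\<dots> = (\<Sum>j<N. if j = l then A $$ (k,l) * cofactor A k l else 0)"
    by (rule sum.cong, auto simp: rz)
  also have "\<dots> = A $$ (k,l) * cofactor A k l" using l by simp
  finally have dA: "det A = A $$ (k,l) * cofactor A k l" .
  have "det B = (\<Sum>j<N. B $$ (k,j) * cofactor B k j)" by (rule laplace_expansion_row[OF B k])
  also have "\<dots> = (\<Sum>j<N. if j = l then B $$ (k,l) * cofactor B k l else 0)"
    by (rule sum.cong, auto simp: row[symmetric] rz)
  also have "\<dots> = B $$ (k,l) * cofactor B k l" using l by simp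
  finally have dB: "det B = B $$ (k,l) * cofactor B k l" .
  show ?thesis unfolding dA dB cofactor_def md row[OF l] ..
qed

definition addll :: "nat \<Rightarrow> 'r::comm_ring_1 mat \<Rightarrow> nat \<Rightarrow> 'r mat" where
  "addll N S l = mat N N (\<lambda>(i,j). S$$(i,j) + (if i = l \<and> j = l then 1 else 0))"

lemma htpy_special: fixes S :: "'a::field mat"
  assumes S: "S \<in> sym_nondeg N" and k: "k<N" and l: "l<N" and kl: "k\<noteq>l" 
  and rowk: "\<And>j. j<N \<Longrightarrow> j \<noteq> l \<Longrightarrow> S$$(k,j) = 0"
  shows "sym_naive_htpc N S (addll N S l)" "addll N S l \<in> sym_nondeg N"
proof -
  have Sc: "S \<in> carrier_mat N N" and St: "transpose_mat S = S" and Sd: "det S dvd 1"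
    using S by (auto simp: sym_nondeg_def)
  note se = sym_entry[OF St Sc]
  define L where "L = map_mat (\<lambda>x. [:x:]) S"
  define H where "H = mat N N (\<lambda>(i,j). [:S$$(i,j):] + (if i = l \<and> j = l then [:0,1:] else 0))"
  have Lc: "L \<in> carrier_mat N N" using Sc by (simp add: L_def)
  have Hc: "H \<in> carrier_mat N N" by (simp add: H_def)
  have "det H = det L"
    by (rule det_eq_rowcol[OF Hc Lc k l], insert Sc k kl rowk, auto simp: H_def L_def)
  hence dH: "det H = [:det S:]" by (simp add: L_def det_lift)
  have "det H dvd 1" unfolding dH using Sd by (auto intro!: is_unit_triv)
  moreover have "\<And>i j. i<N \<Longrightarrow> j<N \<Longrightarrow> H$$(j,i) = H$$(i,j)"
    using Sc by (auto simp: H_def se)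
  ultimately have Hs: "H \<in> sym_nondeg N"
    by (intro sym_nondegI[OF Hc])
  have Ac: "addll N S l \<in> carrier_mat N N" by (simp add: addll_def)
  have "det (addll N S l) = det S"
    by (rule det_eq_rowcol[OF Ac Sc k l], insert Sc k kl rowk, auto simp: addll_def)
  thus "addll N S l \<in> sym_nondeg N"
    by (intro sym_nondegI[OF Ac]) (auto simp: addll_def se Sd)
  have e0: "eval_mat H 0 = S"
    by (rule eq_matI, insert Sc, auto simp: eval_mat_def H_def)
  have e1: "eval_mat H 1 = addll N S l"
    by (rule eq_matI, insert Sc, auto simp: eval_mat_def H_def addll_def)
  show "sym_naive_htpc N S (addll N S l)"
    by (rule elem_htpc, unfold sym_elem_htpy_def, rule bexI[OF _ Hs], simp add: e0 e1)
qed

definition blk :: "'r::zero mat \<Rightarrow> 'r \<Rightarrow> 'r mat" where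
  "blk S u = mat (Suc (dim_row S)) (Suc (dim_row S)) (\<lambda>(i,j). if i < dim_row S \<and> j < dim_row S then S$$(i,j)
     else if i = dim_row S \<and> j = dim_row S then u else 0)"

lemma blk_carrier: "S \<in> carrier_mat m m \<Longrightarrow> blk S u \<in> carrier_mat (Suc m) (Suc m)"
  by (simp add: blk_def)

lemma det_blk: fixes S :: "'a::idom mat" assumes S: "S \<in> carrier_mat m m"
  shows "det (blk S u) = det S * u"
proof -
  have "blk S u = four_block_mat S (0\<^sub>m m 1) (0\<^sub>m 1 m) (mat 1 1 (\<lambda>_. u))"
    by (rule eq_matI, insert S, auto simp: blk_def)
  also have "det \<dots> = det S * det (mat 1 1 (\<lambda>_. u))"
    by (rule det_four_block_mat_lower_left_zero[OF S], auto)
  also have "det (mat 1 1 (\<lambda>_. u)) = u" by (subst det_single, auto)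
  finally show ?thesis .
qed

lemma blk_elem: fixes X :: "'a::field mat"
  assumes h: "sym_elem_htpy m X Y" and u: "u \<noteq> 0"
  shows "sym_elem_htpy (Suc m) (blk X u) (blk Y u)"
proof -
  from h obtain H where H: "H \<in> sym_nondeg m" and X: "eval_mat H 0 = X" and Y: "eval_mat H 1 = Y"
    unfolding sym_elem_htpy_def by auto
  have Hc: "H \<in> carrier_mat m m" and St: "transpose_mat H = H" and Hd: "det H dvd 1"
    using H by (auto simp: sym_nondeg_def)
  note se = sym_entry[OF St Hc]
  define H' where "H' = blk H [:u:]"
  have Hc': "H' \<in> carrier_mat (Suc m) (Suc m)" using Hc by (simp add: H'_def blk_carrier)
  have "det H' = det H * [:u:]" unfolding H'_def by (rule det_blk[OF Hc])
  hence "det H' dvd 1" using Hd u by (simp add: is_unit_triv)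
  moreover have "\<And>i j. i<Suc m \<Longrightarrow> j<Suc m \<Longrightarrow> H'$$(j,i) = H'$$(i,j)"
    using Hc by (auto simp: H'_def blk_def se)
  ultimately have Hs: "H' \<in> sym_nondeg (Suc m)" by (intro sym_nondegI[OF Hc'])
  have ev: "\<And>t. eval_mat H' t = blk (eval_mat H t) (poly [:u:] t)"
    by (rule eq_matI, insert Hc, auto simp: eval_mat_def H'_def blk_def)
  show ?thesis unfolding sym_elem_htpy_def
    by (rule bexI[OF _ Hs], simp add: ev X Y)
qed

lemma blk_htpc: fixes X :: "'a::field mat"
  assumes h: "sym_naive_htpc m X Y" and u: "u \<noteq> 0"
  shows "sym_naive_htpc (Suc m) (blk X u) (blk Y u)"
  using h unfolding sym_naive_htpc_def
proof (induct rule: rtranclp_induct)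
  case base show ?case by simp
next
  case (step y z)
  from step(2) have "sym_elem_htpy (Suc m) (blk y u) (blk z u) \<or> sym_elem_htpy (Suc m) (blk z u) (blk y u)"
    using blk_elem[OF _ u] by blast
  with step(3) show ?case by (rule rtranclp.rtrancl_into_rtrancl)
qed

lemma red_A: fixes S :: "'a::field mat"
  assumes S: "S \<in> sym_nondeg (Suc m)" and u: "S$$(m,m) \<noteq> 0"
  shows "\<exists>S0 \<in> sym_nondeg m. sym_naive_htpc (Suc m) S (blk S0 (S$$(m,m)))"
proof -
  define u where "u = S$$(m,m)"
  have Sc: "S \<in> carrier_mat (Suc m) (Suc m)" and St: "transpose_mat S = S"
    using S by (auto simp: sym_nondeg_def)
  note se = sym_entry[OF St Sc]
  define w where "w = (\<lambda>j. if j < m then - S$$(m,j) / u else 0)"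
  have wp: "w m = 0" by (simp add: w_def)
  have side: "(\<forall>j. w j \<noteq> 0 \<longrightarrow> j < m) \<or> (\<forall>j. w j \<noteq> 0 \<longrightarrow> m < j)"
    by (auto simp: w_def split: if_splits)
  define S' where "S' = congf (Suc m) S m w"
  note h = htpy_congf[OF S _ wp side, folded S'_def]
  have S's: "S' \<in> sym_nondeg (Suc m)" using h by simp
  have S'c: "S' \<in> carrier_mat (Suc m) (Suc m)" and S't: "transpose_mat S' = S'" and S'd: "det S' dvd 1"
    using S's by (auto simp: sym_nondeg_def)
  note se' = sym_entry[OF S't S'c]
  define S0 where "S0 = mat m m (\<lambda>(i,j). S'$$(i,j))"
  have col: "\<And>i. i < m \<Longrightarrow> S'$$(i,m) = 0"
  proof -
    fix i assume i: "i < m"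
    have "S'$$(i,m) = S$$(i,m) + w i * S$$(m,m)" using i wp by (simp add: S'_def congf_def)
    also have "\<dots> = 0" using i u se[of m i] by (simp add: w_def u_def)
    finally show "S'$$(i,m) = 0" .
  qed
  have mm: "S'$$(m,m) = u" using wp by (simp add: S'_def congf_def u_def)
  have eq: "S' = blk S0 u"
  proof (rule eq_matI)
    fix i j assume "i < dim_row (blk S0 u)" "j < dim_col (blk S0 u)"
    hence i: "i < Suc m" and j: "j < Suc m" by (auto simp: blk_def S0_def)
    show "S' $$ (i, j) = blk S0 u $$ (i, j)"
    proof (cases "i < m \<and> j < m")
      case True thus ?thesis by (simp add: blk_def S0_def)
    next
      case False
      hence "i = m \<or> j = m" using i j by auto
      thus ?thesis using i j col se'[of i j] mm by (auto simp: blk_def S0_def)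
    qed
  qed (insert S'c, auto simp: blk_def S0_def)
  have S0c: "S0 \<in> carrier_mat m m" by (simp add: S0_def)
  have "det S' = det S0 * u" unfolding eq by (rule det_blk[OF S0c])
  hence "det S0 dvd 1" using S'd u_def u by (auto simp: dvd_field_iff)
  hence "S0 \<in> sym_nondeg m"
    by (intro sym_nondegI[OF S0c]) (auto simp: S0_def se')
  moreover have "sym_naive_htpc (Suc m) S (blk S0 (S$$(m,m)))" using h eq by (simp add: u_def)
  ultimately show ?thesis by blast
qed

lemma red_B: fixes S :: "'a::field mat"
  assumes S: "S \<in> sym_nondeg (Suc l)" and k: "k < l" and Sll: "S$$(l,l) = 0" and Skk: "S$$(k,k) \<noteq> 0"
  shows "\<exists>S'. sym_naive_htpc (Suc l) S S' \<and> S' \<in> sym_nondeg (Suc l) \<and> S'$$(l,l) \<noteq> 0"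
proof -
  have Sc: "S \<in> carrier_mat (Suc l) (Suc l)" and St: "transpose_mat S = S"
    using S by (auto simp: sym_nondeg_def)
  note se = sym_entry[OF St Sc]
  have lk: "S$$(l,k) = S$$(k,l)" using se[of k l] k by simp
  obtain x :: 'a where x: "2 * x * S$$(k,l) + x * x * S$$(k,k) \<noteq> 0"
  proof (cases "2 * S$$(k,l) + S$$(k,k) = 0")
    case False thus ?thesis using that[of 1] by simp
  next
    case True
    have two: "(2::'a) \<noteq> 0" using True Skk by auto
    have "2 * (-1) * S$$(k,l) + (-1) * (-1) * S$$(k,k) = 2 * S$$(k,k)"
      using True by (simp add: algebra_simps)
    thus ?thesis using that[of "-1"] two Skk by auto
  qed
  define w where "w = (\<lambda>j. if j = l then x else (0::'a))"
  have wp: "w k = 0" using k by (simp add: w_def)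
  have side: "(\<forall>j. w j \<noteq> 0 \<longrightarrow> j < k) \<or> (\<forall>j. w j \<noteq> 0 \<longrightarrow> k < j)"
    using k by (auto simp: w_def)
  note h = htpy_congf[OF S _ wp side]
  have "congf (Suc l) S k w $$ (l,l) = 2 * x * S$$(k,l) + x * x * S$$(k,k)"
    using k Sll lk by (simp add: congf_def w_def algebra_simps)
  thus ?thesis using h x k by auto
qed

lemma red_C: fixes S :: "'a::field mat"
  assumes S: "S \<in> sym_nondeg (Suc l)" and k: "k < l" and Sll: "S$$(l,l) = 0" and Skk: "S$$(k,k) = 0"
    and a: "S$$(k,l) \<noteq> 0"
  shows "\<exists>S'. sym_naive_htpc (Suc l) S S' \<and> S' \<in> sym_nondeg (Suc l) \<and> S'$$(l,l) \<noteq> 0"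
proof -
  have Sc: "S \<in> carrier_mat (Suc l) (Suc l)" and St: "transpose_mat S = S"
    using S by (auto simp: sym_nondeg_def)
  note se = sym_entry[OF St Sc]
  define w where "w = (\<lambda>j. if j < l \<and> j \<noteq> k then - S$$(k,j) / S$$(k,l) else 0)"
  have wp: "w l = 0" by (simp add: w_def)
  have side: "(\<forall>j. w j \<noteq> 0 \<longrightarrow> j < l) \<or> (\<forall>j. w j \<noteq> 0 \<longrightarrow> l < j)"
    by (auto simp: w_def split: if_splits)
  define S1 where "S1 = congf (Suc l) S l w"
  note h = htpy_congf[OF S _ wp side, folded S1_def]
  have S1s: "S1 \<in> sym_nondeg (Suc l)" using h by simp
  have rowk: "\<And>j. j < Suc l \<Longrightarrow> j \<noteq> l \<Longrightarrow> S1$$(k,j) = 0"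
  proof -
    fix j assume j: "j < Suc l" "j \<noteq> l"
    have wk: "w k = 0" by (simp add: w_def)
    have "S1$$(k,j) = S$$(k,j) + w j * S$$(k,l)" using j k wk by (simp add: S1_def congf_def)
    also have "\<dots> = 0" using j a Skk by (auto simp: w_def)
    finally show "S1$$(k,j) = 0" .
  qed
  have S1ll: "S1$$(l,l) = 0" using wp Sll by (simp add: S1_def congf_def)
  have kl: "k < Suc l" "l < Suc l" "k \<noteq> l" using k by auto
  note h2 = htpy_special[OF S1s kl rowk]
  have "addll (Suc l) S1 l $$ (l,l) = 1" using S1ll by (simp add: addll_def)
  moreover have "sym_naive_htpc (Suc l) S (addll (Suc l) S1 l)"
    by (rule htpc_trans[OF _ h2(1)], insert h, simp)
  ultimately show ?thesis using h2(2) by (intro exI[of _ "addll (Suc l) S1 l"], simp)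
qed

lemma red_D: fixes S :: "'a::field mat"
  assumes S: "S \<in> sym_nondeg (Suc m)"
  shows "\<exists>S0 \<in> sym_nondeg m. \<exists>u. u \<noteq> 0 \<and> sym_naive_htpc (Suc m) S (blk S0 u)"
proof -
  have "\<exists>S'. sym_naive_htpc (Suc m) S S' \<and> S' \<in> sym_nondeg (Suc m) \<and> S'$$(m,m) \<noteq> 0"
  proof (cases "S$$(m,m) = 0")
    case False thus ?thesis unfolding sym_naive_htpc_def using S by blast
  next
    case True
    have Sc: "S \<in> carrier_mat (Suc m) (Suc m)" and St: "transpose_mat S = S" and Sd: "det S dvd 1"
      using S by (auto simp: sym_nondeg_def)
    note se = sym_entry[OF St Sc]
    have "\<exists>k < m. S$$(k,m) \<noteq> 0"
    proof (rule ccontr)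
      assume "\<not> ?thesis"
      hence z: "\<And>j. j < Suc m \<Longrightarrow> S$$(m,j) = 0" using True se by (metis less_Suc_eq)
      have "det S = (\<Sum>j<Suc m. S $$ (m,j) * cofactor S m j)" by (rule laplace_expansion_row[OF Sc], simp)
      also have "\<dots> = 0" by (rule sum.neutral, auto simp: z)
      finally show False using Sd by simp
    qed
    then obtain k where k: "k < m" and a: "S$$(k,m) \<noteq> 0" by auto
    show ?thesis
    proof (cases "S$$(k,k) = 0")
      case True' : True
      show ?thesis by (rule red_C[OF S k True True' a])
    next
      case False
      show ?thesis by (rule red_B[OF S k True False])
    qed
  qed
  then obtain S' where h: "sym_naive_htpc (Suc m) S S'" and S': "S' \<in> sym_nondeg (Suc m)" 
    and u: "S'$$(m,m) \<noteq> 0" by auto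
  from red_A[OF S' u] obtain S0 where "S0 \<in> sym_nondeg m" "sym_naive_htpc (Suc m) S' (blk S0 (S'$$(m,m)))"
    by auto
  thus ?thesis using h u htpc_trans by blast
qed

lemma diag_form_snoc: "diag_form (us @ [u]) = blk (diag_form us) u"
  by (rule eq_matI, auto simp: diag_form_def blk_def nth_append)

lemma part1: "S \<in> sym_nondeg n \<Longrightarrow> \<exists>us. length us = n \<and> (\<forall>u \<in> set us. (u::'a::field) \<noteq> 0) \<and> sym_naive_htpc n S (diag_form us)"
proof (induct n arbitrary: S)
  case 0
  hence "S = diag_form []" by (intro eq_matI, auto simp: sym_nondeg_def diag_form_def)
  thus ?case unfolding sym_naive_htpc_def by auto
next
  case (Suc m)
  from red_D[OF Suc(2)] obtain S0 u where S0: "S0 \<in> sym_nondeg m" and u: "u \<noteq> 0"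
    and h: "sym_naive_htpc (Suc m) S (blk S0 u)" by auto
  from Suc(1)[OF S0] obtain us where us: "length us = m" "\<forall>u \<in> set us. u \<noteq> 0" 
    and h2: "sym_naive_htpc m S0 (diag_form us)" by auto
  have "sym_naive_htpc (Suc m) S (diag_form (us @ [u]))"
    unfolding diag_form_snoc using htpc_trans[OF h blk_htpc[OF h2 u]] .
  thus ?case using us u by (intro exI[of _ "us @ [u]"], auto)
qed




lemma sum_split2: "(\<Sum>i\<in>{0..<n+n}. f i) = (\<Sum>i\<in>{0..<n}. f i) + (\<Sum>i\<in>{0..<n}. f (n+i::nat))"
proof -
  have "(\<Sum>i\<in>{0..<n+n}. f i) = (\<Sum>i\<in>{0..<n}. f i) + (\<Sum>i\<in>{n..<n+n}. f i)"
    by (rule sum.atLeastLessThan_concat[symmetric], auto)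
  also have "(\<Sum>i\<in>{n..<n+n}. f i) = (\<Sum>i\<in>{0..<n}. f (n+i))"
    using sum.shift_bounds_nat_ivl[of f 0 n n] by (simp add: add.commute)
  finally show ?thesis .
qed

definition PV :: "nat \<Rightarrow> (nat \<Rightarrow> 'a::comm_ring_1) \<Rightarrow> 'a poly" where
  "PV n c = (\<Sum>i\<in>{0..<n}. monom (c i) (n - Suc i))"
definition QV :: "nat \<Rightarrow> (nat \<Rightarrow> 'a::comm_ring_1) \<Rightarrow> 'a poly" where
  "QV n c = (\<Sum>i\<in>{0..<n}. monom (c (n+i)) (n - Suc i))"

lemma coeff_PV_mult: "coeff (PV n c * A) k = (\<Sum>i\<in>{0..<n}. if n - Suc i \<le> k then c i * coeff A (k - (n - Suc i)) else 0)"
  unfolding PV_def sum_distrib_right coeff_sum by (simp add: coeff_monom_mult)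
lemma coeff_QV_mult: "coeff (QV n c * A) k = (\<Sum>i\<in>{0..<n}. if n - Suc i \<le> k then c (n+i) * coeff A (k - (n - Suc i)) else 0)"
  unfolding QV_def sum_distrib_right coeff_sum by (simp add: coeff_monom_mult)

lemma sylv_K: fixes A B :: "'a::comm_ring_1 poly"
  assumes dA: "degree A \<le> n" and dB: "degree B \<le> n" and j: "j < n+n"
  shows "(\<Sum>i\<in>{0..<n+n}. c i * sylvester_mat_sub n n A B $$ (i,j)) = coeff (PV n c * A + QV n c * B) (n+n-1-j)"
proof -
  let ?S = "sylvester_mat_sub n n A B"
  have 1: "\<And>i. i < n \<Longrightarrow> c i * ?S $$ (i,j) = (if n - Suc i \<le> n+n-1-j then c i * coeff A (n+n-1-j - (n - Suc i)) else 0)"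
  proof -
    fix i assume i: "i < n"
    show "c i * ?S $$ (i,j) = (if n - Suc i \<le> n+n-1-j then c i * coeff A (n+n-1-j - (n - Suc i)) else 0)"
    proof (cases "j < i")
      case True
      have "coeff A (n+n-1-j - (n - Suc i)) = 0" using True i j dA by (intro coeff_eq_0, auto)
      thus ?thesis using True i j by (simp add: sylvester_mat_sub_index)
    next
      case False
      thus ?thesis using i j by (auto simp: sylvester_mat_sub_index intro!: arg_cong[of _ _ "coeff A"])
    qed
  qed
  have 2: "\<And>i. i < n \<Longrightarrow> c (n+i) * ?S $$ (n+i,j) = (if n - Suc i \<le> n+n-1-j then c (n+i) * coeff B (n+n-1-j - (n - Suc i)) else 0)"
  proof -
    fix i assume i: "i < n"
    show "c (n+i) * ?S $$ (n+i,j) = (if n - Suc i \<le> n+n-1-j then c (n+i) * coeff B (n+n-1-j - (n - Suc i)) else 0)"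
    proof (cases "j < i")
      case True
      have "coeff B (n+n-1-j - (n - Suc i)) = 0" using True i j dB by (intro coeff_eq_0, auto)
      thus ?thesis using True i j by (simp add: sylvester_mat_sub_index)
    next
      case False
      thus ?thesis using i j by (auto simp: sylvester_mat_sub_index intro!: arg_cong[of _ _ "coeff B"])
    qed
  qed
  show ?thesis
    unfolding sum_split2 coeff_add coeff_PV_mult coeff_QV_mult
    by (intro arg_cong2[of _ _ _ _ "(+)"] sum.cong refl, auto simp: 1 2)
qed

lemma degree_PV: "degree (PV n c) < n \<or> PV n c = 0"
proof (cases n)
  case 0 thus ?thesis by (simp add: PV_def)
next
  case (Suc m)
  have "degree (PV n c) \<le> m" unfolding PV_def
    by (rule degree_sum_le, auto intro: order.trans[OF degree_monom_le] simp: Suc)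
  thus ?thesis using Suc by auto
qed

lemma degree_QV: "degree (QV n c) < n \<or> QV n c = 0"
proof (cases n)
  case 0 thus ?thesis by (simp add: QV_def)
next
  case (Suc m)
  have "degree (QV n c) \<le> m" unfolding QV_def
    by (rule degree_sum_le, auto intro: order.trans[OF degree_monom_le] simp: Suc)
  thus ?thesis using Suc by auto
qed

lemma degree_PV_mult: assumes "degree A \<le> n" shows "degree (PV n c * A) < n + n \<or> PV n c * A = 0"
proof (cases "PV n c = 0")
  case False
  hence "degree (PV n c) < n" using degree_PV by auto
  hence "degree (PV n c * A) < n + n" using assms
    by (meson add_less_le_mono degree_mult_le le_less_trans)
  thus ?thesis by simp
qed simp

lemma degree_QV_mult: assumes "degree A \<le> n" shows "degree (QV n c * A) < n + n \<or> QV n c * A = 0"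
proof (cases "QV n c = 0")
  case False
  hence "degree (QV n c) < n" using degree_QV by auto
  hence "degree (QV n c * A) < n + n" using assms
    by (meson add_less_le_mono degree_mult_le le_less_trans)
  thus ?thesis by simp
qed simp

lemma res_bezout: fixes A B :: "'a::comm_ring_1 poly"
  assumes dA: "degree A \<le> n" and dB: "degree B \<le> n" and n: "0 < n"
    and r: "resultant_sub n n A B dvd 1"
  shows "\<exists>U V. A*U + B*V = 1"
proof -
  define M where "M = sylvester_mat_sub n n A B"
  have Mc: "M \<in> carrier_mat (n+n) (n+n)" unfolding M_def by (rule sylvester_mat_sub_carrier)
  from r obtain e where de: "1 = det M * e" unfolding resultant_sub_def M_def by (auto elim: dvdE)
  have adj: "adj_mat M * M = det M \<cdot>\<^sub>m 1\<^sub>m (n+n)" and adjc: "adj_mat M \<in> carrier_mat (n+n) (n+n)"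
    using adj_mat[OF Mc] by auto
  define c where "c = (\<lambda>i. e * adj_mat M $$ (n+n-1, i))"
  define P where "P = PV n c * A + QV n c * B"
  have cj: "\<And>j. j < n+n \<Longrightarrow> coeff P (n+n-1-j) = (if j = n+n-1 then 1 else 0)"
  proof -
    fix j assume j: "j < n+n"
    have "coeff P (n+n-1-j) = (\<Sum>i\<in>{0..<n+n}. c i * M $$ (i,j))"
      unfolding P_def M_def by (rule sylv_K[OF dA dB j, symmetric])
    also have "\<dots> = e * (adj_mat M * M) $$ (n+n-1, j)"
      using Mc adjc j n by (simp add: c_def scalar_prod_def sum_distrib_left mult.assoc)
    also have "\<dots> = (if j = n+n-1 then 1 else 0)"
      unfolding adj using j n de by (auto simp: mult.commute)
    finally show "coeff P (n+n-1-j) = (if j = n+n-1 then 1 else 0)" .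
  qed
  have dP: "\<And>k. n + n \<le> k \<Longrightarrow> coeff P k = 0"
  proof -
    fix k assume k: "n + n \<le> k"
    have "coeff (PV n c * A) k = 0" using degree_PV_mult[OF dA, of c] k by (auto intro: coeff_eq_0)
    moreover have "coeff (QV n c * B) k = 0" using degree_QV_mult[OF dB, of c] k by (auto intro: coeff_eq_0)
    ultimately show "coeff P k = 0" by (simp add: P_def)
  qed
  have "P = 1"
  proof (rule poly_eqI)
    fix k
    show "coeff P k = coeff 1 k"
    proof (cases "k < n+n")
      case True
      from cj[of "n+n-1-k"] True have "coeff P k = (if n+n-1-k = n+n-1 then 1 else 0)" by simp
      thus ?thesis using True by (auto simp: coeff_1)
    next
      case False thus ?thesis using dP n by (auto simp: coeff_1)
    qed
  qed
  thus ?thesis unfolding P_def by (metis mult.commute)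
qed

lemma bezout_reduce: fixes A B :: "'a::idom poly"
  assumes mA: "lead_coeff A = 1" and dA: "degree A = n" and dB: "degree B < n" and bz: "A*U + B*V = 1"
    and W: "degree W < n + n"
  shows "\<exists>P Q. (P = 0 \<or> degree P < n) \<and> (Q = 0 \<or> degree Q < n) \<and> P*A + Q*B = W"
proof -
  have A0: "A \<noteq> 0" using mA by auto
  obtain q s where pd: "pseudo_divmod (W*V) A = (q,s)" by (cases "pseudo_divmod (W*V) A")
  from pseudo_divmod[OF A0 pd] mA have WV: "W*V = A*q + s" and ds: "s = 0 \<or> degree s < n"
    using dA by auto
  define P where "P = W*U + B*q"
  have eq: "P*A + s*B = W"
  proof -
    have "W = W * (A*U + B*V)" using bz by simp
    also have "\<dots> = A*(W*U) + B*(W*V)" by (simp add: algebra_simps)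
    also have "\<dots> = P*A + s*B" unfolding WV P_def by (simp add: algebra_simps)
    finally show ?thesis by simp
  qed
  have dsB: "degree (s*B) < n + n"
  proof (cases "s = 0")
    case False
    with ds have "degree s < n" by auto
    thus ?thesis using dB by (meson add_strict_mono degree_mult_le le_less_trans)
  qed (insert dB, simp)
  have "P = 0 \<or> degree P < n"
  proof (cases "P = 0")
    case False
    have "degree (A * P) = n + degree P" using degree_monic_mult[of A P] mA False dA by simp
    moreover have "A * P = W - s*B" using eq by (simp add: algebra_simps)
    moreover have "degree (W - s*B) < n + n" 
      using degree_diff_le_max[of W "s*B"] W dsB by auto
    ultimately show ?thesis by auto
  qed simp
  thus ?thesis using ds eq by blast
qed

lemma PV_coeffs: assumes "P = 0 \<or> degree P < n"
  shows "PV n (\<lambda>i. coeff P (n - Suc i)) = P"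
proof -
  have "PV n (\<lambda>i. coeff P (n - Suc i)) = (\<Sum>i<n. monom (coeff P (n - Suc i)) (n - Suc i))"
    by (simp add: PV_def atLeast0LessThan)
  also have "\<dots> = (\<Sum>i<n. monom (coeff P i) i)" by (rule sum.nat_diff_reindex)
  also have "\<dots> = P"
  proof (cases n)
    case 0 thus ?thesis using assms by auto
  next
    case (Suc m)
    have "{..<n} = {..m}" using Suc by auto
    moreover have "degree P \<le> m" using assms Suc by auto
    ultimately show ?thesis using poly_as_sum_of_monoms'[of P m] by simp
  qed
  finally show ?thesis .
qed

lemma QV_coeffs: assumes "P = 0 \<or> degree P < n"
  shows "QV n (\<lambda>i. coeff P (n - Suc (i - n))) = P"
proof -
  have "QV n (\<lambda>i. coeff P (n - Suc (i - n))) = PV n (\<lambda>i. coeff P (n - Suc i))"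
    by (simp add: QV_def PV_def)
  thus ?thesis using PV_coeffs[OF assms] by simp
qed

lemma bezout_res: fixes A B :: "'a::idom poly"
  assumes mA: "lead_coeff A = 1" and dA: "degree A = n" and dB: "degree B < n" and bz: "A*U + B*V = 1"
  shows "resultant_sub n n A B dvd 1"
proof -
  define M where "M = sylvester_mat_sub n n A B"
  have Mc: "M \<in> carrier_mat (n+n) (n+n)" unfolding M_def by (rule sylvester_mat_sub_carrier)
  have "\<forall>r. \<exists>PQ. r < n+n \<longrightarrow> ((fst PQ = 0 \<or> degree (fst PQ) < n) \<and> (snd PQ = 0 \<or> degree (snd PQ) < n) 
     \<and> fst PQ * A + snd PQ * B = monom 1 (n+n-1-r))"
  proof (intro allI impI)
    fix r
    show "\<exists>PQ. r < n+n \<longrightarrow> ((fst PQ = 0 \<or> degree (fst PQ) < n) \<and> (snd PQ = 0 \<or> degree (snd PQ) < n) 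
     \<and> fst PQ * A + snd PQ * B = monom 1 (n+n-1-r))"
    proof (cases "r < n+n")
      case True
      have "degree (monom (1::'a) (n+n-1-r)) < n + n" using True by (simp add: degree_monom_eq)
      from bezout_reduce[OF mA dA dB bz this] show ?thesis by auto
    qed auto
  qed
  then obtain F where F: "\<And>r. r < n+n \<Longrightarrow> (fst (F r) = 0 \<or> degree (fst (F r)) < n) \<and> (snd (F r) = 0 \<or> degree (snd (F r)) < n) 
     \<and> fst (F r) * A + snd (F r) * B = monom 1 (n+n-1-r)" by metis
  define c where "c = (\<lambda>r i. if i < n then coeff (fst (F r)) (n - Suc i) else coeff (snd (F r)) (n - Suc (i - n)))"
  have cPQ: "\<And>r. r < n+n \<Longrightarrow> PV n (c r) * A + QV n (c r) * B = monom 1 (n+n-1-r)"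
  proof -
    fix r assume r: "r < n+n"
    have "PV n (c r) = PV n (\<lambda>i. coeff (fst (F r)) (n - Suc i))" by (simp add: PV_def c_def)
    also have "\<dots> = fst (F r)" by (rule PV_coeffs, insert F[OF r], auto)
    finally have 1: "PV n (c r) = fst (F r)" .
    have "QV n (c r) = QV n (\<lambda>i. coeff (snd (F r)) (n - Suc (i - n)))" by (simp add: QV_def c_def)
    also have "\<dots> = snd (F r)" by (rule QV_coeffs, insert F[OF r], auto)
    finally have 2: "QV n (c r) = snd (F r)" .
    show "PV n (c r) * A + QV n (c r) * B = monom 1 (n+n-1-r)" unfolding 1 2 using F[OF r] by auto
  qed
  define N where "N = mat (n+n) (n+n) (\<lambda>(r,i). c r i)"
  have Nc: "N \<in> carrier_mat (n+n) (n+n)" by (simp add: N_def)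
  have dA': "degree A \<le> n" and dB': "degree B \<le> n" using dA dB by auto
  have "N * M = 1\<^sub>m (n+n)"
  proof (rule eq_matI)
    fix r j assume "r < dim_row (1\<^sub>m (n+n))" "j < dim_col (1\<^sub>m (n+n))"
    hence r: "r < n+n" and j: "j < n+n" by auto
    have "(N * M) $$ (r,j) = (\<Sum>i\<in>{0..<n+n}. c r i * M $$ (i,j))"
      using Mc Nc r j by (simp add: N_def scalar_prod_def)
    also have "\<dots> = coeff (monom 1 (n+n-1-r)) (n+n-1-j)"
      unfolding M_def sylv_K[OF dA' dB' j] cPQ[OF r] ..
    also have "\<dots> = 1\<^sub>m (n+n) $$ (r,j)" using r j by (auto simp: coeff_monom)
    finally show "(N * M) $$ (r,j) = 1\<^sub>m (n+n) $$ (r,j)" .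
  qed (insert Mc Nc, auto)
  hence "det N * det M = 1" using det_mult[OF Nc Mc] by simp
  thus ?thesis unfolding resultant_sub_def M_def[symmetric] by (metis dvdI mult.commute)
qed

lemma ratfun_iff: fixes A B :: "'a::idom poly"
  shows "(A,B) \<in> ratfun n \<longleftrightarrow> lead_coeff A = 1 \<and> degree A = n \<and> degree B < n \<and> (\<exists>U V. A*U + B*V = 1)"
proof
  assume "(A,B) \<in> ratfun n"
  hence *: "lead_coeff A = 1" "degree A = n" "degree B < n" "resultant_sub n n A B dvd 1"
    by (auto simp: ratfun_def)
  have "\<exists>U V. A*U + B*V = 1" by (rule res_bezout[OF _ _ _ *(4)], insert *, auto)
  thus "lead_coeff A = 1 \<and> degree A = n \<and> degree B < n \<and> (\<exists>U V. A*U + B*V = 1)" using * by auto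
next
  assume "lead_coeff A = 1 \<and> degree A = n \<and> degree B < n \<and> (\<exists>U V. A*U + B*V = 1)"
  then obtain U V where *: "lead_coeff A = 1" "degree A = n" "degree B < n" "A*U + B*V = 1" by auto
  show "(A,B) \<in> ratfun n" using bezout_res[OF *] * by (auto simp: ratfun_def)
qed




abbreviation ev :: "'a::comm_ring_1 \<Rightarrow> 'a poly poly \<Rightarrow> 'a poly" where
  "ev t p \<equiv> map_poly (\<lambda>c. poly c t) p"
abbreviation lift :: "'a::comm_ring_1 poly \<Rightarrow> 'a poly poly" where
  "lift p \<equiv> map_poly (\<lambda>x. [:x:]) p"

lemma ev_hom: "map_poly_comm_ring_hom (\<lambda>c::'a::comm_ring_1 poly. poly c t)"
  by unfold_locales

lemma ev_mult[simp]: "ev t (p * q) = ev t p * ev t q"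
proof -
  interpret map_poly_comm_ring_hom "\<lambda>c::'a::comm_ring_1 poly. poly c t" by unfold_locales
  show ?thesis by (rule hom_mult)
qed

lemma ev_add[simp]: "ev t (p + q) = ev t p + ev t q"
  by (rule map_poly_add, auto)

lemma ev_diff[simp]: "ev t (p - q) = ev t p - ev t q"
proof -
  interpret map_poly_comm_ring_hom "\<lambda>c::'a::comm_ring_1 poly. poly c t" by unfold_locales
  show ?thesis by (rule hom_minus)
qed

lemma ev_pCons[simp]: "ev t (pCons a p) = pCons (poly a t) (ev t p)"
  by (rule poly_hom.map_poly_pCons_hom)

lemma ev_smult[simp]: "ev t (smult a p) = smult (poly a t) (ev t p)"
  by (rule poly_hom.map_poly_hom_smult)

lemma ev_monom[simp]: "ev t (monom a i) = monom (poly a t) i"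
  by (rule poly_hom.map_poly_hom_monom)

lemma ev_lift[simp]: "ev t (lift p) = p"
  by (subst map_poly_map_poly, auto simp: o_def)

lemma lift_hom: "comm_ring_hom (\<lambda>x::'a::comm_ring_1. [:x:])"
  by (unfold_locales) (auto simp: one_pCons)

lemma lift_mult[simp]: "lift (p * q) = lift p * lift (q :: 'a :: comm_ring_1 poly)"
proof -
  interpret map_poly_comm_ring_hom "\<lambda>x::'a. [:x:]" by (rule map_poly_comm_ring_hom.intro, rule lift_hom)
  show ?thesis by (rule hom_mult)
qed

lemma lift_diff[simp]: "lift (p - q) = lift p - lift (q :: 'a :: comm_ring_1 poly)"
proof -
  interpret map_poly_comm_ring_hom "\<lambda>x::'a. [:x:]" by (rule map_poly_comm_ring_hom.intro, rule lift_hom)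
  show ?thesis by (rule hom_minus)
qed

lemma coeff_lift[simp]: "coeff (lift p) i = [:coeff p i:]"
  by (simp add: coeff_map_poly)

lemma lift_add[simp]: "lift (p + q) = lift p + lift (q :: 'a :: comm_ring_1 poly)"
  by (rule map_poly_add, auto)

lemma lift_one[simp]: "lift (1 :: 'a :: comm_ring_1 poly) = 1"
  by (simp add: one_pCons)

lemma lift_zero[simp]: "lift (0 :: 'a :: comm_ring_1 poly) = 0" by simp

lemma lift_eq0[simp]: "lift p = 0 \<longleftrightarrow> p = (0 :: 'a :: comm_ring_1 poly)"
  by (metis ev_lift lift_zero)

lemma degree_lift[simp]: "degree (lift (p :: 'a :: comm_ring_1 poly)) = degree p"
  by (rule degree_map_poly, auto)

lemma lead_coeff_lift[simp]: "lead_coeff (lift (p :: 'a :: comm_ring_1 poly)) = [:lead_coeff p:]"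
  by (simp add: coeff_map_poly)

lemma prod_good: fixes A1 B1 U1 V1 A2 B2 U2 V2 :: "'b::idom poly"
  assumes m1: "lead_coeff A1 = 1" and d1: "degree A1 = d" and d0: "0 < d" and b1: "degree B1 < d"
  and v1: "V1 = 0 \<or> degree V1 < d" and u1: "U1 = 0 \<or> degree U1 < d" and bz1: "A1*U1 + B1*V1 = 1"
  and m2: "lead_coeff A2 = 1" and d2: "degree A2 = m" and b2: "B2 = 0 \<or> degree B2 < m" 
  and bz2: "A2*U2 + B2*V2 = 1"
  shows "(A1*A2 - V1*B2, B1*A2 + U1*B2) \<in> ratfun (d+m)"
proof -
  have A10: "A1 \<noteq> 0" and A20: "A2 \<noteq> 0" using m1 m2 by auto
  have dA: "degree (A1*A2) = d+m" using degree_mult_eq[OF A10 A20] d1 d2 by simp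
  have lA: "lead_coeff (A1*A2) = 1" using m1 m2 by (simp add: lead_coeff_mult)
  have dVB: "degree (V1*B2) < d+m"
  proof (cases "V1 = 0 \<or> B2 = 0")
    case True thus ?thesis using d0 by auto
  next
    case False
    hence "degree V1 < d" "degree B2 < m" using v1 b2 by auto
    thus ?thesis using degree_mult_le[of V1 B2] by linarith
  qed
  have dBA: "degree (B1*A2) < d+m" using degree_mult_le[of B1 A2] b1 d2 by linarith
  have dUB: "degree (U1*B2) < d+m"
  proof (cases "U1 = 0 \<or> B2 = 0")
    case True thus ?thesis using d0 by auto
  next
    case False
    hence "degree U1 < d" "degree B2 < m" using u1 b2 by auto
    thus ?thesis using degree_mult_le[of U1 B2] by linarith
  qed
  have eqA: "A1*A2 - V1*B2 = (- (V1*B2)) + A1*A2" by simp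
  have dA': "degree (A1*A2 - V1*B2) = d+m" unfolding eqA 
    by (subst degree_add_eq_right, insert dVB dA, auto)
  have lA': "lead_coeff (A1*A2 - V1*B2) = 1" unfolding eqA
    by (subst lead_coeff_add_le, insert dVB dA lA, auto)
  have dB': "degree (B1*A2 + U1*B2) < d+m"
    using degree_add_le[of "B1*A2" "d+m-1" "U1*B2"] dBA dUB by linarith
  have "(A1*A2 - V1*B2) * (U1*U2 - B1*V2) + (B1*A2 + U1*B2) * (A1*V2 + V1*U2) 
      = (A1*U1 + B1*V1) * (A2*U2 + B2*V2)" by (simp add: algebra_simps)
  hence "(A1*A2 - V1*B2) * (U1*U2 - B1*V2) + (B1*A2 + U1*B2) * (A1*V2 + V1*U2) = 1"
    using bz1 bz2 by simp
  thus ?thesis unfolding ratfun_iff using dA' lA' dB' by blast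
qed

lemma ratfun_htpc_elem: "ratfun_elem_htpy n f g \<Longrightarrow> ratfun_naive_htpc n f g"
  unfolding ratfun_naive_htpc_def by (rule r_into_rtranclp) simp

lemma ratfun_htpc_elem': "ratfun_elem_htpy n g f \<Longrightarrow> ratfun_naive_htpc n f g"
  unfolding ratfun_naive_htpc_def by (rule r_into_rtranclp) simp

lemma ratfun_htpc_trans: "ratfun_naive_htpc n f g \<Longrightarrow> ratfun_naive_htpc n g h \<Longrightarrow> ratfun_naive_htpc n f h"
  unfolding ratfun_naive_htpc_def by (rule rtranclp_trans)

lemma ratfun_htpc_refl: "ratfun_naive_htpc n f f"
  unfolding ratfun_naive_htpc_def by simp

lemma ratfun_htpc_sym: "ratfun_naive_htpc n f g \<Longrightarrow> ratfun_naive_htpc n g f"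
  unfolding ratfun_naive_htpc_def
proof (induct rule: rtranclp_induct)
  case (step y z)
  have "(\<lambda>x y. ratfun_elem_htpy n x y \<or> ratfun_elem_htpy n y x)\<^sup>*\<^sup>* z y" using step(2) by auto
  thus ?case using step(3) by (rule rtranclp_trans)
qed simp

lemma lift_prod_htpy1: fixes A1 B1 U1 V1 :: "'a::field poly poly" and A2 B2 U2 V2 :: "'a poly"
  assumes m1: "lead_coeff A1 = 1" and d1: "degree A1 = d" and d0: "0 < d" and b1: "degree B1 < d"
  and v1: "V1 = 0 \<or> degree V1 < d" and u1: "U1 = 0 \<or> degree U1 < d" and bz1: "A1*U1 + B1*V1 = 1"
  and m2: "lead_coeff A2 = 1" and d2: "degree A2 = m" and b2: "B2 = 0 \<or> degree B2 < m" 
  and bz2: "A2*U2 + B2*V2 = 1"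
  shows "ratfun_elem_htpy (d+m) (ev 0 A1 * A2 - ev 0 V1 * B2, ev 0 B1 * A2 + ev 0 U1 * B2)
                               (ev 1 A1 * A2 - ev 1 V1 * B2, ev 1 B1 * A2 + ev 1 U1 * B2)"
proof -
  have bz2': "lift A2 * lift U2 + lift B2 * lift V2 = 1"
    using arg_cong[OF bz2, of lift] by simp
  have H: "(A1 * lift A2 - V1 * lift B2, B1 * lift A2 + U1 * lift B2) \<in> ratfun (d+m)"
    by (rule prod_good[OF m1 d1 d0 b1 v1 u1 bz1 _ _ _ bz2'], insert m2 d2 b2, auto simp: pCons_one)
  show ?thesis unfolding ratfun_elem_htpy_def
    by (rule bexI[OF _ H], simp add: eval_ratfun_def)
qed

lemma lift_prod_htpy2: fixes A1 B1 U1 V1 :: "'a::field poly"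
  assumes m1: "lead_coeff A1 = 1" and d1: "degree A1 = d" and d0: "0 < d" and b1: "degree B1 < d"
  and v1: "V1 = 0 \<or> degree V1 < d" and u1: "U1 = 0 \<or> degree U1 < d" and bz1: "A1*U1 + B1*V1 = 1"
  and h: "ratfun_elem_htpy m f g"
  shows "ratfun_elem_htpy (d+m) (A1 * fst f - V1 * snd f, B1 * fst f + U1 * snd f)
                               (A1 * fst g - V1 * snd g, B1 * fst g + U1 * snd g)"
proof -
  from h obtain A2 B2 where H2: "(A2,B2) \<in> ratfun m" and f: "eval_ratfun (A2,B2) 0 = f" 
    and g: "eval_ratfun (A2,B2) 1 = g"
    unfolding ratfun_elem_htpy_def by auto
  from H2[unfolded ratfun_iff] obtain U2 V2 where m2: "lead_coeff A2 = 1" and d2: "degree A2 = m"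
    and b2: "degree B2 < m" and bz2: "A2*U2 + B2*V2 = 1" by auto
  have bz1': "lift A1 * lift U1 + lift B1 * lift V1 = 1"
    using arg_cong[OF bz1, of lift] by simp
  have H: "(lift A1 * A2 - lift V1 * B2, lift B1 * A2 + lift U1 * B2) \<in> ratfun (d+m)"
    by (rule prod_good[OF _ _ d0 _ _ _ bz1' m2 d2 _ bz2], insert m1 d1 b1 v1 u1 b2, auto simp: pCons_one)
  show ?thesis unfolding ratfun_elem_htpy_def
    by (rule bexI[OF _ H], insert f g, auto simp: eval_ratfun_def)
qed

lemma lift_prod_htpc2: fixes A1 B1 U1 V1 :: "'a::field poly"
  assumes m1: "lead_coeff A1 = 1" and d1: "degree A1 = d" and d0: "0 < d" and b1: "degree B1 < d"
  and v1: "V1 = 0 \<or> degree V1 < d" and u1: "U1 = 0 \<or> degree U1 < d" and bz1: "A1*U1 + B1*V1 = 1"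
  and h: "ratfun_naive_htpc m f g"
  shows "ratfun_naive_htpc (d+m) (A1 * fst f - V1 * snd f, B1 * fst f + U1 * snd f)
                               (A1 * fst g - V1 * snd g, B1 * fst g + U1 * snd g)"
  using h unfolding ratfun_naive_htpc_def
proof (induct rule: rtranclp_induct)
  case (step y z)
  note l = lift_prod_htpy2[OF m1 d1 d0 b1 v1 u1 bz1]
  from step(2) l[of m y z] l[of m z y] 
  have "ratfun_elem_htpy (d+m) (A1 * fst y - V1 * snd y, B1 * fst y + U1 * snd y) (A1 * fst z - V1 * snd z, B1 * fst z + U1 * snd z)
    \<or> ratfun_elem_htpy (d+m) (A1 * fst z - V1 * snd z, B1 * fst z + U1 * snd z) (A1 * fst y - V1 * snd y, B1 * fst y + U1 * snd y)"
    by blast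
  with step(3) show ?case by (rule rtranclp.rtrancl_into_rtrancl)
qed simp




lemma bezout_X: assumes u: "(u::'a::field) \<noteq> 0"
  shows "bezout_UV [:0,1:] [:u:] = (0, [:1/u:])"
  unfolding bezout_UV_def
proof (rule the_equality)
  show "case (0, [:1/u:]) of (U, V) \<Rightarrow> [:0, 1:] * U + [:u:] * V = 1 \<and>
    (U = 0 \<or> degree U + 2 \<le> degree [:0, 1::'a:]) \<and> (V = 0 \<or> degree V + 1 \<le> degree [:0, 1::'a:])"
    using u by (simp add: one_pCons)
next
  fix x :: "'a poly \<times> 'a poly"
  assume a: "case x of (U, V) \<Rightarrow> [:0, 1:] * U + [:u:] * V = 1 \<and>
    (U = 0 \<or> degree U + 2 \<le> degree [:0, 1::'a:]) \<and> (V = 0 \<or> degree V + 1 \<le> degree [:0, 1::'a:])"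
  obtain U V where x: "x = (U,V)" by (cases x)
  from a x have U: "U = 0" and e: "[:u:] * V = 1" by auto
  have "V = smult (1/u) ([:u:] * V)" using u by simp
  also have "\<dots> = [:1/u:]" unfolding e by (simp add: one_pCons)
  finally show "x = (0, [:1/u:])" using x U by simp
qed

lemma oplusN_X: assumes u: "(u::'a::field) \<noteq> 0"
  shows "oplusN ([:0,1:],[:u:]) f = ([:0,1:] * fst f - [:1/u:] * snd f, [:u:] * fst f + 0 * snd f)"
  by (cases f, simp add: oplusN_def bezout_X[OF u])

lemma unit_deg0: fixes A :: "'a::field poly" assumes "A * U = 1" shows "degree A = 0"
proof -
  have "A \<noteq> 0" "U \<noteq> 0" using assms by auto
  hence "degree (A*U) = degree A + degree U" by (rule degree_mult_eq)
  thus ?thesis using assms by simp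
qed

lemma shift_htpc: fixes A B :: "'a::field poly"
  assumes mA: "lead_coeff A = 1" and dA: "degree A = n" and dB: "degree B < n" and bz: "A*U + B*V = 1"
  shows "ratfun_naive_htpc n (A,B) (A + smult c B, B)"
proof -
  define H where "H = (lift A + smult [:0,c:] (lift B), lift B)"
  have ds: "degree (smult [:0,c:] (lift B)) < n" using dB degree_smult_le[of "[:0,c:]" "lift B"] by simp
  have dH: "degree (fst H) = n" unfolding H_def using ds dA by (simp add: degree_add_eq_left)
  have z: "coeff (smult [:0,c:] (lift B)) n = 0" by (rule coeff_eq_0[OF ds])
  have "lead_coeff (fst H) = coeff (fst H) n" using dH by simp
  also have "\<dots> = coeff (lift A) n + coeff (smult [:0,c:] (lift B)) n" unfolding H_def fst_conv coeff_add ..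
  also have "\<dots> = 1" unfolding z using mA dA by (simp add: pCons_one)
  finally have lH: "lead_coeff (fst H) = 1" .
  have "fst H * lift U + snd H * (lift V - smult [:0,c:] (lift U)) = lift (A*U + B*V)"
    unfolding H_def by (simp add: algebra_simps)
  hence "fst H * lift U + snd H * (lift V - smult [:0,c:] (lift U)) = 1" using bz by simp
  hence "H \<in> ratfun n" using dH lH dB unfolding H_def by (auto simp: ratfun_iff)
  moreover have "eval_ratfun H 0 = (A,B)" "eval_ratfun H 1 = (A + smult c B, B)"
    by (auto simp: H_def eval_ratfun_def)
  ultimately show ?thesis 
    by (intro ratfun_htpc_elem[unfolded ratfun_elem_htpy_def] bexI[of _ H]) auto
qed

lemma step23: fixes A B :: "'a::field poly"
  assumes mA: "lead_coeff A = 1" and dA: "degree A = n" and n2: "2 \<le> n" and dB: "degree B = n - 1"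
    and bz: "A*U + B*V = 1"
  shows "\<exists>u f'. u \<noteq> 0 \<and> f' \<in> ratfun (n-1) \<and> ratfun_naive_htpc n (A,B) (oplusN ([:0,1:],[:u:]) f')"
proof -
  define u where "u = lead_coeff B"
  have B0: "B \<noteq> 0" using dB n2 by auto
  hence u0: "u \<noteq> 0" by (simp add: u_def)
  define c where "c = (coeff B (n-2) / u - coeff A (n-1)) / u"
  define A2 where "A2 = A + smult c B"
  have h1: "ratfun_naive_htpc n (A,B) (A2,B)" unfolding A2_def
    by (rule shift_htpc[OF mA dA _ bz], insert dB n2, auto)
  have cA2: "\<And>i. coeff A2 i = coeff A i + c * coeff B i" by (simp add: A2_def)
  have cAn: "coeff A n = 1" using mA dA by simp
  have cBn1: "coeff B (n-1) = u" using dB by (simp add: u_def)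
  have cA0: "\<And>i. i > n \<Longrightarrow> coeff A i = 0" using dA by (simp add: coeff_eq_0)
  have cB0: "\<And>i. i > n - 1 \<Longrightarrow> coeff B i = 0" using dB by (simp add: coeff_eq_0)
  define X where "X = [:0,1::'a:]"
  define A' where "A' = smult (1/u) B"
  define B' where "B' = X * B - smult u A2"
  define U2 where "U2 = U"
  define V2 where "V2 = V - smult c U"
  have bz2: "A2 * U2 + B * V2 = 1" using bz by (simp add: A2_def U2_def V2_def algebra_simps)
  have eq: "oplusN ([:0,1:],[:u:]) (A',B') = (A2,B)"
    unfolding oplusN_X[OF u0] using u0 by (simp add: A'_def B'_def X_def algebra_simps)
  have mA': "lead_coeff A' = 1" "degree A' = n - 1" using u0 dB by (auto simp: A'_def u_def)
  have cB': "\<And>i. coeff B' i = (if i = 0 then 0 else coeff B (i - 1)) - u * coeff A2 i"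
    by (simp add: B'_def X_def coeff_pCons split: nat.split)
  have "\<forall>i > n - 2. coeff B' i = 0"
  proof (intro allI impI)
    fix i assume i: "i > n - 2"
    consider "i = n - 1" | "i = n" | "i > n" using i n2 by linarith
    thus "coeff B' i = 0"
    proof cases
      case 1
      hence "coeff B' i = coeff B (n-2) - u * (coeff A (n-1) + c * u)" 
        using n2 cBn1 by (simp add: cB' cA2 numeral_2_eq_2)
      also have "\<dots> = 0" using u0 by (simp add: c_def field_simps)
      finally show ?thesis .
    next
      case 2
      thus ?thesis using n2 cBn1 cAn cB0[of n] by (simp add: cB' cA2)
    next
      case 3
      thus ?thesis using n2 cA0[of i] cB0[of i] cB0[of "i-1"] by (simp add: cB' cA2)
    qed
  qed
  hence "degree B' \<le> n - 2" by (rule degree_le)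
  hence dB': "degree B' < n - 1" using n2 by linarith
  have "A' * (smult u V2 + X * U2) + B' * (- smult (1/u) U2) = smult (u * (1/u)) (A2 * U2 + B * V2)"
    by (simp add: A'_def B'_def algebra_simps)
  hence "A' * (smult u V2 + X * U2) + B' * (- smult (1/u) U2) = 1" using u0 bz2 by simp
  hence "\<exists>U V. A' * U + B' * V = 1" by blast
  hence "(A',B') \<in> ratfun (n-1)" using mA' dB' by (simp add: ratfun_iff)
  thus ?thesis using h1 eq u0 by metis
qed




lemma step_raise: fixes A B U V :: "'a::field poly"
  assumes mA: "lead_coeff A = 1" and dA: "degree A = n" and n2: "2 \<le> n" and dB: "degree B < n" 
    and bz: "A*U + B*V = 1"
  shows "\<exists>A1 B1. ratfun_naive_htpc n (A,B) (A1,B1) \<and> lead_coeff A1 = 1 \<and> degree A1 = n 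
     \<and> degree B1 = n - 1 \<and> (\<exists>U V. A1*U + B1*V = 1)"
proof (cases "degree B = n - 1")
  case True thus ?thesis using mA dA bz ratfun_htpc_refl by blast
next
  case False
  define m where "m = degree B"
  have mlt: "m < n - 1" using False dB m_def by auto
  define d where "d = n - m"
  have d2: "2 \<le> d" and dm: "d + m = n" using mlt n2 by (auto simp: d_def)
  have d0: "0 < d" using d2 by auto
  have B0: "B \<noteq> 0"
  proof
    assume "B = 0"
    hence "A * U = 1" using bz by simp
    from unit_deg0[OF this] dA n2 show False by simp
  qed
  define c where "c = lead_coeff B"
  have c0: "c \<noteq> 0" using B0 by (simp add: c_def)
  define q where "q = A div B"
  define r where "r = A mod B"
  have Aqr: "A = q * B + r" unfolding q_def r_def by simp
  have dr: "r = 0 \<or> degree r < m" using degree_mod_less[OF B0, of A] by (auto simp: r_def m_def)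
  have q0: "q \<noteq> 0"
  proof
    assume "q = 0"
    hence "A = r" using Aqr by simp
    thus False using dr dA mA mlt by auto
  qed
  have dqB: "degree (q * B) = degree q + m" using degree_mult_eq[OF q0 B0] by (simp add: m_def)
  have Arq: "A = r + q * B" using Aqr by simp
  have drqB: "degree r < degree (q * B)"
  proof (cases "r = 0")
    case True
    hence "degree (q * B) = n" using Aqr dA by simp
    thus ?thesis using True n2 by simp
  next
    case False
    thus ?thesis using dr dqB by simp
  qed
  have "degree A = degree (q * B)" unfolding Arq by (rule degree_add_eq_right[OF drqB])
  hence dq: "degree q = d" using dA dqB by (simp add: d_def)
  have "lead_coeff A = lead_coeff (q * B)" unfolding Arq by (rule lead_coeff_add_le[OF drqB])
  hence lq: "lead_coeff q * c = 1" using mA by (simp add: lead_coeff_mult c_def)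
  define Q0 where "Q0 = smult c q"
  have dQ0: "degree Q0 = d" using c0 dq by (simp add: Q0_def)
  have lQ0: "lead_coeff Q0 = 1" using c0 lq by (simp add: Q0_def mult.commute)
  define A' where "A' = smult (1/c) B"
  define B' where "B' = smult (-c) r"
  define U' where "U' = smult c (q*U + V)"
  define V' where "V' = smult (-1/c) U"
  have mA': "lead_coeff A' = 1" and dA': "degree A' = m" using c0 by (auto simp: A'_def c_def m_def)
  have dB': "B' = 0 \<or> degree B' < m" using dr c0 by (auto simp: B'_def)
  have bz': "A'*U' + B'*V' = 1"
  proof -
    have "A'*U' + B'*V' = smult (1/c * c) (B*(q*U+V)) + smult ((-c) * (-1/c)) (r*U)"
      by (simp add: A'_def B'_def U'_def V'_def mult_smult_left mult_smult_right)
    also have "\<dots> = (q*B + r)*U + B*V" using c0 by (simp add: algebra_simps)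
    finally show ?thesis using Aqr bz by simp
  qed
  have eqA: "Q0 * A' - [:1/c:] * B' = A"
  proof -
    have "Q0 * A' - [:1/c:] * B' = smult (c * (1/c)) (q*B) - smult ((1/c) * (-c)) r"
      by (simp add: Q0_def A'_def B'_def mult_smult_left mult_smult_right)
    also have "\<dots> = A" using c0 Aqr by simp
    finally show ?thesis .
  qed
  have eqB: "[:c:] * A' + 0 * B' = B" using c0 by (simp add: A'_def)
  define R where "R = Q0 - monom 1 d"
  have "degree R \<le> d" unfolding R_def using dQ0 
    by (intro degree_diff_le, auto intro: order.trans[OF degree_monom_le])
  moreover have "coeff R d = 0" using lQ0 dQ0 by (simp add: R_def)
  ultimately have dR: "R = 0 \<or> degree R < d" by (rule eq_zero_or_degree_less)
  define A1 where "A1 = lift (monom 1 d) + smult [:0,1:] (lift R)"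
  have small: "degree (smult [:0,1:] (lift R)) < d"
    using dR d0 degree_smult_le[of "[:0,1:]" "lift R"] by auto
  have dm1: "degree (lift (monom (1::'a) d)) = d" by (simp add: degree_monom_eq)
  have dA1: "degree A1 = d" unfolding A1_def using small dm1 by (simp add: degree_add_eq_left)
  have z: "coeff (smult [:0,1:] (lift R)) d = 0" by (rule coeff_eq_0[OF small])
  have "lead_coeff A1 = coeff A1 d" using dA1 by simp
  also have "\<dots> = coeff (lift (monom 1 d)) d + coeff (smult [:0,1:] (lift R)) d" unfolding A1_def coeff_add ..
  also have "\<dots> = 1" unfolding z by (simp add: pCons_one)
  finally have lA1: "lead_coeff A1 = 1" .
  have bz1: "A1 * 0 + [:[:c:]:] * [:[:1/c:]:] = 1" using c0 by (simp add: pCons_one)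
  have H1: "ratfun_elem_htpy (d+m) (ev 0 A1 * A' - ev 0 [:[:1/c:]:] * B', ev 0 [:[:c:]:] * A' + ev 0 0 * B')
     (ev 1 A1 * A' - ev 1 [:[:1/c:]:] * B', ev 1 [:[:c:]:] * A' + ev 1 0 * B')"
    by (rule lift_prod_htpy1[OF lA1 dA1 d0 _ _ _ bz1 mA' dA' dB' bz'], insert d0, auto)
  have e0A1: "ev 0 A1 = monom 1 d" by (simp add: A1_def)
  have e1A1: "ev 1 A1 = Q0" by (simp add: A1_def R_def)
  define g where "g = (monom 1 d * A' - [:1/c:] * B', [:c:] * A' + 0 * B')"
  have c1: "\<And>t x. ev t [:[:x:]:] = [:x:]" by simp
  have c2: "\<And>t. ev t (0::'a poly poly) = 0" by simp
  have eqA': "(Q0 * A' - [:1/c:] * B', [:c:] * A' + 0 * B') = (A,B)" using eqA eqB by simp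
  have h1: "ratfun_naive_htpc n (A,B) g"
    using H1 unfolding c1 c2 e0A1 e1A1 dm eqA' g_def[symmetric] by (rule ratfun_htpc_elem')
  obtain e where de: "d = Suc (Suc e)" using d2 by (metis add_2_eq_Suc le_Suc_ex)
  define A2f :: "'a poly poly" where "A2f = monom 1 d"
  define B2f :: "'a poly poly" where "B2f = monom [:c:] 0 + monom [:0,1:] (Suc e)"
  define V2f :: "'a poly poly" where "V2f = monom [:1/c:] 0 - monom [:0, 1/c^2:] (Suc e)"
  define U2f :: "'a poly poly" where "U2f = monom [:0,0,1/c^2:] e"
  have f1: "[:c:]*[:1/c:] = (1::'a poly)" using c0 by (simp add: one_pCons)
  have f2: "[:c:]*[:0,1/c^2:] = [:0,1/c:]" using c0 by (simp add: power2_eq_square)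
  have f3: "[:0,1:]*[:1/c:] = [:0,1/c:]" by simp
  have f4: "[:0,1:]*[:0,1/c^2:] = [:0,0,1/c^2:]" by simp
  have bz2f: "A2f*U2f + B2f*V2f = 1"
  proof -
    have "A2f*U2f + B2f*V2f = monom ([:c:]*[:1/c:]) 0 + (monom ([:0,1:]*[:1/c:]) (Suc e) - monom ([:c:]*[:0,1/c^2:]) (Suc e))
       + (monom [:0,0,1/c^2:] (Suc (Suc (e + e))) - monom ([:0,1:]*[:0,1/c^2:]) (Suc (Suc (e + e))))"
      unfolding A2f_def U2f_def B2f_def V2f_def de 
      by (simp add: algebra_simps mult_monom del: pCons_0_0 mult_pCons_left mult_pCons_right)
    also have "\<dots> = 1" unfolding f1 f2 f3 f4 by (simp add: monom_0 one_pCons)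
    finally show ?thesis .
  qed
  have lA2f: "lead_coeff A2f = 1" and dA2f: "degree A2f = d" by (auto simp: A2f_def degree_monom_eq)
  have dB2f: "degree B2f < d" unfolding B2f_def de
    by (rule le_less_trans[OF degree_add_le[OF order.trans[OF degree_monom_le] degree_monom_le]], auto)
  have dV2f: "degree V2f < d" unfolding V2f_def de
    by (rule le_less_trans[OF degree_diff_le[OF order.trans[OF degree_monom_le] degree_monom_le]], auto)
  have dU2f: "degree U2f < d" unfolding U2f_def de
    by (rule le_less_trans[OF degree_monom_le], auto)
  have H2: "ratfun_elem_htpy (d+m) (ev 0 A2f * A' - ev 0 V2f * B', ev 0 B2f * A' + ev 0 U2f * B')
     (ev 1 A2f * A' - ev 1 V2f * B', ev 1 B2f * A' + ev 1 U2f * B')"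
    by (rule lift_prod_htpy1[OF lA2f dA2f d0 dB2f _ _ bz2f mA' dA' dB' bz'], insert dV2f dU2f, auto)
  have "ev 0 A2f = monom 1 d" "ev 0 V2f = [:1/c:]" "ev 0 B2f = [:c:]" "ev 0 U2f = 0"
    by (auto simp: A2f_def V2f_def B2f_def U2f_def monom_0)
  hence H2': "ratfun_elem_htpy n g (ev 1 A2f * A' - ev 1 V2f * B', ev 1 B2f * A' + ev 1 U2f * B')"
    using H2 unfolding g_def dm by simp
  define A1' where "A1' = ev 1 A2f * A' - ev 1 V2f * B'"
  define B1' where "B1' = ev 1 B2f * A' + ev 1 U2f * B'"
  have bze: "ev 1 A2f * ev 1 U2f + ev 1 B2f * ev 1 V2f = 1"
    using arg_cong[OF bz2f, of "ev 1"] by (simp add: pCons_one)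
  have le1: "\<And>p. degree (ev 1 p) \<le> degree p" by (rule degree_map_poly_le)
  have "(A1', B1') \<in> ratfun (d+m)" unfolding A1'_def B1'_def
    by (rule prod_good[OF _ _ d0 _ _ _ bze mA' dA' dB' bz'], insert le1[of A2f] le1[of B2f] le1[of V2f] le1[of U2f]
        lA2f dA2f dB2f dV2f dU2f, auto simp: A2f_def degree_monom_eq)
  hence r1: "lead_coeff A1' = 1" "degree A1' = n" "\<exists>U V. A1'*U + B1'*V = 1" unfolding ratfun_iff dm by auto
  have eB: "ev 1 B2f = [:c:] + monom 1 (Suc e)" and eU: "ev 1 U2f = monom (1/c^2) e"
    by (auto simp: B2f_def U2f_def monom_0)
  have dBe: "degree (ev 1 B2f) = Suc e" unfolding eB
    by (subst degree_add_eq_right) (auto simp: degree_monom_eq)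
  have lBe: "lead_coeff (ev 1 B2f) = 1" unfolding eB
    by (subst lead_coeff_add_le) (auto simp: degree_monom_eq)
  have A'0: "A' \<noteq> 0" using mA' by auto
  have Be0: "ev 1 B2f \<noteq> 0"
  proof
    assume "ev 1 B2f = 0"
    with lBe show False by simp
  qed
  have dBA: "degree (ev 1 B2f * A') = n - 1" 
    using degree_mult_eq[OF Be0 A'0] dBe dA' de dm by auto
  have dUB: "degree (ev 1 U2f * B') < n - 1"
  proof (cases "B' = 0")
    case False
    hence "degree B' < m" using dB' by auto
    moreover have "degree (ev 1 U2f) \<le> e" unfolding eU by (rule degree_monom_le)
    ultimately show ?thesis using degree_mult_le[of "ev 1 U2f" B'] de dm by linarith
  qed (insert de dm, auto)
  have dB1': "degree B1' = n - 1" unfolding B1'_def by (subst degree_add_eq_left, insert dBA dUB, auto)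
  have "ratfun_naive_htpc n (A,B) (A1',B1')"
    by (rule ratfun_htpc_trans[OF h1 ratfun_htpc_elem], insert H2', simp add: A1'_def B1'_def)
  thus ?thesis using r1 dB1' by blast
qed




lemma part2_base: fixes A B :: "'a::field poly"
  assumes f: "(A,B) \<in> ratfun 1"
  shows "\<exists>us. length us = 1 \<and> (\<forall>u \<in> set us. u \<noteq> 0) \<and> ratfun_naive_htpc 1 (A,B) (diag_ratfun us)"
proof -
  from f[unfolded ratfun_iff] obtain U V where mA: "lead_coeff A = 1" and dA: "degree A = 1"
    and dB: "degree B < 1" and bz: "A*U + B*V = 1" by auto
  define b where "b = coeff B 0"
  have Bb: "B = [:b:]" using dB unfolding b_def by (metis degree_0_id less_one)
  have b0: "b \<noteq> 0"
  proof
    assume "b = 0"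
    hence "A * U = 1" using bz Bb by simp
    from unit_deg0[OF this] dA show False by simp
  qed
  define a where "a = coeff A 0"
  have Aa: "A = [:a, 1:]"
  proof (rule poly_eqI)
    fix i show "coeff A i = coeff [:a,1:] i"
      using mA dA by (cases i, simp add: a_def, rename_tac j, case_tac j, auto simp: coeff_eq_0)
  qed
  define H :: "'a poly poly \<times> 'a poly poly" where "H = ([:[:0,a:], 1:], [:[:b:]:])"
  have "fst H * 0 + snd H * [:[:1/b:]:] = 1" using b0 by (simp add: H_def one_pCons)
  hence bzH: "\<exists>U V. fst H * U + snd H * V = 1" by blast
  have "lead_coeff (fst H) = 1" "degree (fst H) = 1" "degree (snd H) < 1" by (auto simp: H_def)
  hence "(fst H, snd H) \<in> ratfun 1" using bzH by (subst ratfun_iff) blast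
  hence "H \<in> ratfun 1" by simp
  moreover have "eval_ratfun H 0 = diag_ratfun [b]" "eval_ratfun H 1 = (A,B)"
    by (auto simp: H_def eval_ratfun_def Aa Bb)
  ultimately have "ratfun_naive_htpc 1 (A,B) (diag_ratfun [b])"
    by (intro ratfun_htpc_elem'[unfolded ratfun_elem_htpy_def] bexI[of _ H]) auto
  thus ?thesis using b0 by (intro exI[of _ "[b]"]) auto
qed

lemma part2: "f \<in> ratfun (Suc m) \<Longrightarrow> \<exists>us. length us = Suc m \<and> (\<forall>u \<in> set us. (u::'a::field) \<noteq> 0) 
   \<and> ratfun_naive_htpc (Suc m) f (diag_ratfun us)"
proof (induct m arbitrary: f)
  case 0
  obtain A B where f: "f = (A,B)" by (cases f)
  show ?case using part2_base 0 unfolding f by simp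
next
  case (Suc m)
  obtain A B where f: "f = (A,B)" by (cases f)
  from Suc(2)[unfolded f ratfun_iff] obtain U V where mA: "lead_coeff A = 1" and dA: "degree A = Suc (Suc m)"
    and dB: "degree B < Suc (Suc m)" and bz: "A*U + B*V = 1" by auto
  from step_raise[OF mA dA _ dB bz] obtain A1 B1 U1 V1 where h1: "ratfun_naive_htpc (Suc (Suc m)) (A,B) (A1,B1)"
    and m1: "lead_coeff A1 = 1" and d1: "degree A1 = Suc (Suc m)" and b1: "degree B1 = Suc (Suc m) - 1"
    and bz1: "A1*U1 + B1*V1 = 1" by auto
  from step23[OF m1 d1 _ b1 bz1] obtain u f' where u: "u \<noteq> 0" and f': "f' \<in> ratfun (Suc m)"
    and h2: "ratfun_naive_htpc (Suc (Suc m)) (A1,B1) (oplusN ([:0,1:],[:u:]) f')" by auto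
  from Suc(1)[OF f'] obtain us where us: "length us = Suc m" "\<forall>u \<in> set us. u \<noteq> 0"
    and h3: "ratfun_naive_htpc (Suc m) f' (diag_ratfun us)" by auto
  have bzX: "[:0,1:] * 0 + [:u:] * [:1/u:] = (1::'a poly)" using u by (simp add: one_pCons)
  have h4: "ratfun_naive_htpc (1 + Suc m) (oplusN ([:0,1:],[:u:]) f') (oplusN ([:0,1:],[:u:]) (diag_ratfun us))"
    unfolding oplusN_X[OF u]
    by (rule lift_prod_htpc2[OF _ _ _ _ _ _ bzX h3], auto)
  obtain v vs where uv: "us = v # vs" using us(1) by (cases us, auto)
  have dd: "diag_ratfun (u # us) = oplusN ([:0,1:],[:u:]) (diag_ratfun us)" unfolding uv by simp
  have "ratfun_naive_htpc (Suc (Suc m)) f (diag_ratfun (u # us))"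
    unfolding f dd using ratfun_htpc_trans[OF h1 ratfun_htpc_trans[OF h2 h4[simplified]]] .
  thus ?case using us u by (intro exI[of _ "u # us"]) auto
qed

theorem lemma3p14:
  fixes n :: nat
  assumes "n \<ge> 1"
  shows "(\<forall>S :: 'a::field mat. S \<in> sym_nondeg n \<longrightarrow>
            (\<exists>us. length us = n \<and> (\<forall>u \<in> set us. u \<noteq> 0) \<and>
                  sym_naive_htpc n S (diag_form us)))
       \<and> (\<forall>f :: 'a poly \<times> 'a poly. f \<in> ratfun n \<longrightarrow>
            (\<exists>us. length us = n \<and> (\<forall>u \<in> set us. u \<noteq> 0) \<and>
                  ratfun_naive_htpc n f (diag_ratfun us)))"
proof -
  obtain m where n: "n = Suc m" using assms by (cases n, auto)
  show ?thesis unfolding n using part1 part2 by blast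
qed


end
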